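(* Let $N\geqslant 2$, $c_0<c_1<\dots<c_N$ in $\mathbb{R}$, and let $f:[c_0,c_N]\to[c_0,c_N]$ be a piecewise contracting map with contraction pieces $X_1=[c_0,c_1)$, $X_2=(c_1,c_2),\dots,X_N=(c_{N-1},c_N]$ which satisfies the separation property. Suppose there exists $i\in\{1,\dots,N-1\}$ such that (1) for some $j\in\{i,i+1\}$, $f_j(c_i)\in\widetilde X$ and $\{f^n(f_j(c_i))\}_{n\in\mathbb{N}}$ is dense in $\Lambda$; and (2) $c_i\in\Delta_{lr}(x_0)$ for some $x_0\in\widetilde X$. Then for any $\epsilon>0$ and any $y\in\Lambda$ such that $\Lambda\cap(y,y+\nu)\neq\emptyset$ for all $\nu>0$ (resp. $\Lambda\cap(y-\nu,y)\neq\emptyset$ for all $\nu>0$), there exists $l\geqslant 0$ with $f^l(x_0)\in(y,y+\epsilon)$ (resp. $f^l(x_0)\in(y-\epsilon,y)$).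
   Context: $\Delta=\{c_1,\dots,c_{N-1}\}$. Piecewise contracting: $f$ is discontinuous at each $c_i$, $1\leqslant i\leqslant N-1$, and there is $\lambda\in(0,1)$ with $|f(x)-f(y)|\leqslant\lambda|x-y|$ for $x,y$ in the same $X_i$; $f_i:\overline{X_i}\to[c_0,c_N]$ is the continuous extension of $f|_{X_i}$. Separation property: each $f_i$ injective and $f_i(\overline{X_i})\cap f_j(\overline{X_j})=\emptyset$ for $i\neq j$. $\widetilde X:=\bigcap_{n\geqslant0}f^{-n}([c_0,c_N]\setminus\Delta)$. Atoms: $F_i(A):=\overline{f(A\cap X_i)}$, $A_{i_1\dots i_n}:=F_{i_n}\circ\dots\circ F_{i_1}([c_0,c_N])$ is an atom of generation $n$ if non-empty; $\mathcal{A}_n$ is their set; the attractor is $\Lambda:=\bigcap_{n\geqslant1}\bigcup_{A\in\mathcal{A}_n}A$; $\mathcal{A}_n(x):=\{A\in\mathcal{A}_n:\exists t\in\mathbb{N}, f^{t+n}(x)\in A\}$. $c_i\in\Delta_{lr}(x)$ means: for every $n\geqslant1$ there is $A\in\mathcal{A}_n(x)$ with $c_i\in A$, $f^{t+n}(x)\in A\cap X_i$ and $f^{t'+n}(x)\in A\cap X_{i+1}$ for some $t,t'\in\mathbb{N}$. *)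

theory Defs
  imports "HOL-Analysis.Analysis"
begin

definition piece :: "(nat \<Rightarrow> real) \<Rightarrow> nat \<Rightarrow> nat \<Rightarrow> real set" where
  "piece c N i =
     (if i = 1 then {c 0..<c 1}
      else if i = N then {c (N - 1)<..c N}
      else {c (i - 1)<..<c i})"

definition disc_set :: "(nat \<Rightarrow> real) \<Rightarrow> nat \<Rightarrow> real set" where
  "disc_set c N = c ` {1..N - 1}"

definition piece_ext :: "(nat \<Rightarrow> real) \<Rightarrow> nat \<Rightarrow> (real \<Rightarrow> real) \<Rightarrow> nat \<Rightarrow> real \<Rightarrow> real" where
  "piece_ext c N f i x = Lim (at x within piece c N i) f"

definition piecewise_contracting :: "(nat \<Rightarrow> real) \<Rightarrow> nat \<Rightarrow> (real \<Rightarrow> real) \<Rightarrow> bool" where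
  "piecewise_contracting c N f \<longleftrightarrow>
     f ` {c 0..c N} \<subseteq> {c 0..c N} \<and>
     (\<forall>i\<in>{1..N - 1}. \<not> continuous (at (c i) within {c 0..c N}) f) \<and>
     (\<exists>lam. 0 < lam \<and> lam < 1 \<and>
        (\<forall>i\<in>{1..N}. \<forall>x\<in>piece c N i. \<forall>y\<in>piece c N i. \<bar>f x - f y\<bar> \<le> lam * \<bar>x - y\<bar>))"

definition separation :: "(nat \<Rightarrow> real) \<Rightarrow> nat \<Rightarrow> (real \<Rightarrow> real) \<Rightarrow> bool" where
  "separation c N f \<longleftrightarrow>
     (\<forall>i\<in>{1..N}. inj_on (piece_ext c N f i) (closure (piece c N i))) \<and>
     (\<forall>i\<in>{1..N}. \<forall>j\<in>{1..N}. i \<noteq> j \<longrightarrow>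
        piece_ext c N f i ` closure (piece c N i) \<inter> piece_ext c N f j ` closure (piece c N j) = {})"

definition Xtilde :: "(nat \<Rightarrow> real) \<Rightarrow> nat \<Rightarrow> (real \<Rightarrow> real) \<Rightarrow> real set" where
  "Xtilde c N f = {x. \<forall>n. (f ^^ n) x \<in> {c 0..c N} - disc_set c N}"

definition Fmap :: "(nat \<Rightarrow> real) \<Rightarrow> nat \<Rightarrow> (real \<Rightarrow> real) \<Rightarrow> nat \<Rightarrow> real set \<Rightarrow> real set" where
  "Fmap c N f i A = closure (f ` (A \<inter> piece c N i))"

text \<open>A_{i_1...i_n} = F_{i_n} o ... o F_{i_1}([c0,cN]); the word is the list [i_1,...,i_n].\<close>
definition atom :: "(nat \<Rightarrow> real) \<Rightarrow> nat \<Rightarrow> (real \<Rightarrow> real) \<Rightarrow> nat list \<Rightarrow> real set" where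
  "atom c N f w = fold (Fmap c N f) w {c 0..c N}"

definition atoms :: "(nat \<Rightarrow> real) \<Rightarrow> nat \<Rightarrow> (real \<Rightarrow> real) \<Rightarrow> nat \<Rightarrow> real set set" where
  "atoms c N f n = {atom c N f w | w. length w = n \<and> set w \<subseteq> {1..N} \<and> atom c N f w \<noteq> {}}"

definition attractor :: "(nat \<Rightarrow> real) \<Rightarrow> nat \<Rightarrow> (real \<Rightarrow> real) \<Rightarrow> real set" where
  "attractor c N f = (\<Inter>n\<in>{1..}. \<Union>(atoms c N f n))"

definition atoms_of :: "(nat \<Rightarrow> real) \<Rightarrow> nat \<Rightarrow> (real \<Rightarrow> real) \<Rightarrow> nat \<Rightarrow> real \<Rightarrow> real set set" where
  "atoms_of c N f n x = {A \<in> atoms c N f n. \<exists>t. (f ^^ (t + n)) x \<in> A}"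

definition in_Delta_lr :: "(nat \<Rightarrow> real) \<Rightarrow> nat \<Rightarrow> (real \<Rightarrow> real) \<Rightarrow> nat \<Rightarrow> real \<Rightarrow> bool" where
  "in_Delta_lr c N f i x \<longleftrightarrow>
     (\<forall>n\<ge>1. \<exists>A\<in>atoms_of c N f n x. c i \<in> A \<and>
        (\<exists>t. (f ^^ (t + n)) x \<in> A \<inter> piece c N i) \<and>
        (\<exists>t'. (f ^^ (t' + n)) x \<in> A \<inter> piece c N (i + 1)))"

end

theory Submission
  imports Defs
begin

lemma closure_dist_bound:
  fixes S :: "real set"
  assumes "\<forall>u\<in>S. \<forall>v\<in>S. dist u v \<le> R" "a \<in> closure S" "b \<in> closure S"
  shows "dist a b \<le> R"
proof -
  have 1: "dist u b' \<le> R" if "u \<in> S" "b' \<in> closure S" for u b'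
  proof -
    have "S \<subseteq> cball u R" using assms(1) that(1) by (auto simp: cball_def)
    then have "closure S \<subseteq> cball u R" by (simp add: closure_minimal)
    then show ?thesis using that by auto
  qed
  have "S \<subseteq> cball b R" using 1 assms(3) by (auto simp: cball_def dist_commute)
  then have "closure S \<subseteq> cball b R" by (simp add: closure_minimal)
  then show ?thesis using assms(2) by (auto simp: cball_def dist_commute)
qed

lemma atom_diam:
  assumes lip: "\<forall>k\<in>{1..N}. \<forall>x\<in>piece c N k. \<forall>y\<in>piece c N k. \<bar>f x - f y\<bar> \<le> lam * \<bar>x - y\<bar>"
    and lam: "0 \<le> lam"
  shows "set w \<subseteq> {1..N} \<Longrightarrow> a \<in> atom c N f w \<Longrightarrow> b \<in> atom c N f w \<Longrightarrow>
     \<bar>a - b\<bar> \<le> lam ^ length w * (c N - c 0)"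
proof (induction w arbitrary: a b rule: rev_induct)
  case Nil
  then show ?case by (auto simp: atom_def)
next
  case (snoc k w)
  have eq: "atom c N f (w @ [k]) = closure (f ` (atom c N f w \<inter> piece c N k))"
    by (simp add: atom_def Fmap_def)
  have k: "k \<in> {1..N}" using snoc.prems by auto
  have "\<forall>u\<in>f ` (atom c N f w \<inter> piece c N k). \<forall>v\<in>f ` (atom c N f w \<inter> piece c N k).
      dist u v \<le> lam ^ length (w @ [k]) * (c N - c 0)"
  proof (intro ballI)
    fix u v assume "u \<in> f ` (atom c N f w \<inter> piece c N k)" "v \<in> f ` (atom c N f w \<inter> piece c N k)"
    then obtain x y where x: "x \<in> atom c N f w" "x \<in> piece c N k" "u = f x"
      and y: "y \<in> atom c N f w" "y \<in> piece c N k" "v = f y" by auto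
    have "\<bar>x - y\<bar> \<le> lam ^ length w * (c N - c 0)"
      using snoc.IH[OF _ x(1) y(1)] snoc.prems(1) by auto
    then have "lam * \<bar>x - y\<bar> \<le> lam * (lam ^ length w * (c N - c 0))"
      using lam by (simp add: mult_left_mono)
    moreover have "\<bar>f x - f y\<bar> \<le> lam * \<bar>x - y\<bar>" using lip k x y by blast
    ultimately show "dist u v \<le> lam ^ length (w @ [k]) * (c N - c 0)"
      using x y by (simp add: dist_real_def)
  qed
  from closure_dist_bound[OF this] snoc.prems(2,3) eq show ?case
    by (simp add: dist_real_def)
qed

lemma local_piece:
  assumes mono: "strict_mono_on {0..N} c" and N: "N \<ge> 2"
    and q: "q \<in> {c 0..c N}" "q \<notin> disc_set c N"
  shows "\<exists>k\<in>{1..N}. \<exists>r>0. q \<in> piece c N k \<and> (\<forall>w\<in>{c 0..c N}. \<bar>w - q\<bar> < r \<longrightarrow> w \<in> piece c N k)"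
proof -
  have lt: "c a < c b" if "a < b" "b \<le> N" for a b
    using mono that unfolding strict_mono_on_def by auto
  define k where "k = (LEAST k. q \<le> c k)"
  have qk: "q \<le> c k" unfolding k_def by (rule LeastI[of _ N]) (use q in auto)
  have kN: "k \<le> N" unfolding k_def by (rule Least_le) (use q in auto)
  have below: "c m < q" if "m < k" for m
    using not_less_Least[of m "\<lambda>k. q \<le> c k"] that unfolding k_def by auto
  show ?thesis
  proof (cases "k = 0")
    case True
    then have "q = c 0" using qk q by auto
    moreover have "c 0 < c 1" using lt[of 0 1] N by auto
    ultimately show ?thesis using N
      by (intro bexI[of _ 1] exI[of _ "c 1 - c 0"]) (auto simp: piece_def)
  next
    case False
    have km: "c (k - 1) < q" using below False by auto
    show ?thesis
    proof (cases "q = c k")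
      case True
      then have "k \<notin> {1..N - 1}" using q(2) unfolding disc_set_def by auto
      then have "k = N" using False kN by auto
      moreover have "c (N - 1) < c N" using lt[of "N - 1" N] N by auto
      ultimately show ?thesis using N True
        by (intro bexI[of _ N] exI[of _ "c N - c (N - 1)"]) (auto simp: piece_def)
    next
      case ne: False
      then have "q < c k" using qk by auto
      have sub: "{c (k - 1)<..<c k} \<subseteq> piece c N k"
        unfolding piece_def by auto
      show ?thesis
        apply (intro bexI[of _ k] exI[of _ "min (q - c (k - 1)) (c k - q)"])
        using sub km \<open>q < c k\<close> False kN by (auto simp: abs_less_iff)
    qed
  qed
qed


lemma orbit_cont:
  assumes mono: "strict_mono_on {0..N} c" and N: "N \<ge> 2"
    and lip: "\<forall>k\<in>{1..N}. \<forall>x\<in>piece c N k. \<forall>y\<in>piece c N k. \<bar>f x - f y\<bar> \<le> lam * \<bar>x - y\<bar>"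
    and lam: "lam < 1" "0 \<le> lam"
    and maps: "f ` {c 0..c N} \<subseteq> {c 0..c N}"
    and p: "p \<in> Xtilde c N f"
  shows "\<exists>r>0. \<forall>w\<in>{c 0..c N}. \<bar>w - p\<bar> < r \<longrightarrow> \<bar>(f ^^ m) w - (f ^^ m) p\<bar> \<le> \<bar>w - p\<bar>"
proof (induction m)
  case 0
  then show ?case by (auto intro: exI[of _ 1])
next
  case (Suc m)
  then obtain r where r: "r > 0" "\<forall>w\<in>{c 0..c N}. \<bar>w - p\<bar> < r \<longrightarrow> \<bar>(f ^^ m) w - (f ^^ m) p\<bar> \<le> \<bar>w - p\<bar>"
    by blast
  have q: "(f ^^ m) p \<in> {c 0..c N}" "(f ^^ m) p \<notin> disc_set c N"
    using p unfolding Xtilde_def by auto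
  obtain k r' where k: "k \<in> {1..N}" "r' > 0" "(f ^^ m) p \<in> piece c N k"
    "\<forall>w\<in>{c 0..c N}. \<bar>w - (f ^^ m) p\<bar> < r' \<longrightarrow> w \<in> piece c N k"
    using local_piece[OF mono N q] by blast
  have inv: "(f ^^ n) w \<in> {c 0..c N}" if "w \<in> {c 0..c N}" for n w
    using that proof (induction n)
    case (Suc n) then show ?case using maps by (simp add: image_subset_iff)
  qed simp
  show ?case
  proof (intro exI[of _ "min r r'"] conjI ballI impI)
    show "0 < min r r'" using r k by auto
    fix w assume w: "w \<in> {c 0..c N}" "\<bar>w - p\<bar> < min r r'"
    have 1: "\<bar>(f ^^ m) w - (f ^^ m) p\<bar> \<le> \<bar>w - p\<bar>" using r w by auto
    then have "(f ^^ m) w \<in> piece c N k" using k(4) inv[OF w(1)] w(2) by auto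
    then have "\<bar>f ((f ^^ m) w) - f ((f ^^ m) p)\<bar> \<le> lam * \<bar>(f ^^ m) w - (f ^^ m) p\<bar>"
      using lip k by blast
    also have "\<dots> \<le> \<bar>(f ^^ m) w - (f ^^ m) p\<bar>"
      using lam by (simp add: mult_left_le_one_le)
    finally show "\<bar>(f ^^ Suc m) w - (f ^^ Suc m) p\<bar> \<le> \<bar>w - p\<bar>" using 1 by simp
  qed
qed

theorem lemma6:
  fixes c :: "nat \<Rightarrow> real" and N :: nat and f :: "real \<Rightarrow> real" and i :: nat and x0 :: real
  assumes "N \<ge> 2"
    and "strict_mono_on {0..N} c"
    and "piecewise_contracting c N f"
    and "separation c N f"
    and "i \<in> {1..N - 1}"
    and "\<exists>j\<in>{i, i + 1}. piece_ext c N f j (c i) \<in> Xtilde c N f \<and>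
           attractor c N f \<subseteq> closure (range (\<lambda>n. (f ^^ n) (piece_ext c N f j (c i))))"
    and "x0 \<in> Xtilde c N f"
    and "in_Delta_lr c N f i x0"
  shows "\<forall>\<epsilon>>0. \<forall>y\<in>attractor c N f.
           ((\<forall>\<nu>>0. attractor c N f \<inter> {y<..<y + \<nu>} \<noteq> {}) \<longrightarrow>
              (\<exists>l. (f ^^ l) x0 \<in> {y<..<y + \<epsilon>})) \<and>
           ((\<forall>\<nu>>0. attractor c N f \<inter> {y - \<nu><..<y} \<noteq> {}) \<longrightarrow>
              (\<exists>l. (f ^^ l) x0 \<in> {y - \<epsilon><..<y}))"
proof -
  obtain lam where lam: "0 < lam" "lam < 1"
    and lip: "\<forall>k\<in>{1..N}. \<forall>x\<in>piece c N k. \<forall>y\<in>piece c N k. \<bar>f x - f y\<bar> \<le> lam * \<bar>x - y\<bar>"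
    using assms(3) unfolding piecewise_contracting_def by blast
  have maps: "f ` {c 0..c N} \<subseteq> {c 0..c N}" using assms(3) unfolding piecewise_contracting_def by blast
  have inv: "(f ^^ n) w \<in> {c 0..c N}" if "w \<in> {c 0..c N}" for n w
    using that proof (induction n)
    case (Suc n) then show ?case using maps by (simp add: image_subset_iff)
  qed simp
  have lt: "c a < c b" if "a < b" "b \<le> N" for a b
    using assms(2) that unfolding strict_mono_on_def by auto
  have i: "1 \<le> i" "i \<le> N - 1" using assms(5) by auto
  obtain j where j: "j \<in> {i, i + 1}" and pX: "piece_ext c N f j (c i) \<in> Xtilde c N f"
    and dense: "attractor c N f \<subseteq> closure (range (\<lambda>n. (f ^^ n) (piece_ext c N f j (c i))))"
    using assms(6) by blast
  define p where "p = piece_ext c N f j (c i)"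
  have x0S: "x0 \<in> {c 0..c N}" using assms(7) unfolding Xtilde_def by (auto dest: spec[of _ 0])
  have lti: "c (i - 1) < c i" "c i < c (i + 1)" using lt[of "i - 1" i] lt[of i "i+1"] i by auto
  have cl: "c i \<in> closure (piece c N j)" "c i \<notin> piece c N j"
    using j i lti by (auto simp: piece_def)
  have jN: "j \<in> {1..N}" using j i by auto
  have uc: "uniformly_continuous_on (piece c N j) f"
    unfolding uniformly_continuous_on_def
  proof (intro allI impI)
    fix e :: real assume "e > 0"
    show "\<exists>d>0. \<forall>x\<in>piece c N j. \<forall>x'\<in>piece c N j. dist x' x < d \<longrightarrow> dist (f x') (f x) < e"
    proof (intro exI[of _ e] conjI ballI impI)
      fix x x' assume xx: "x \<in> piece c N j" "x' \<in> piece c N j" "dist x' x < e"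
      have "\<bar>f x' - f x\<bar> \<le> lam * \<bar>x' - x\<bar>" using lip jN xx by blast
      also have "\<dots> \<le> \<bar>x' - x\<bar>" using lam by (simp add: mult_left_le_one_le)
      finally show "dist (f x') (f x) < e" using xx by (simp add: dist_real_def)
    qed (use \<open>e > 0\<close> in auto)
  qed
  obtain l where l: "(f \<longlongrightarrow> l) (at (c i) within piece c N j)"
    using uniformly_continuous_on_extension_at_closure[OF uc cl(1)] by blast
  have ntriv: "\<not> trivial_limit (at (c i) within piece c N j)"
    using cl unfolding trivial_limit_within closure_def by auto
  have lim: "(f \<longlongrightarrow> p) (at (c i) within piece c N j)"
    using l tendsto_Lim[OF ntriv l] unfolding p_def piece_ext_def by simp
  have key: "\<exists>l. (f ^^ l) x0 \<in> U" if U: "open U" "z \<in> U" "z \<in> attractor c N f" for U z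
  proof -
    have "z \<in> closure (range (\<lambda>n. (f ^^ n) p))" using dense U p_def by auto
    then have "range (\<lambda>n. (f ^^ n) p) \<inter> U \<noteq> {}"
      using U unfolding closure_iff_nhds_not_empty by blast
    then obtain m where m: "(f ^^ m) p \<in> U" by auto
    then obtain e where e: "e > 0" "ball ((f ^^ m) p) e \<subseteq> U"
      using U(1) openE by blast
    obtain r where r: "r > 0" "\<forall>w\<in>{c 0..c N}. \<bar>w - p\<bar> < r \<longrightarrow> \<bar>(f ^^ m) w - (f ^^ m) p\<bar> \<le> \<bar>w - p\<bar>"
      using orbit_cont[OF assms(2,1) lip lam(2) _ maps pX[folded p_def], of m] lam by auto
    have "eventually (\<lambda>x. dist (f x) p < min e r) (at (c i) within piece c N j)"
      using lim e(1) r(1) unfolding tendsto_iff by (metis min_def)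
    then obtain th where th: "th > 0"
      "\<forall>x\<in>piece c N j. x \<noteq> c i \<and> dist x (c i) < th \<longrightarrow> dist (f x) p < min e r"
      unfolding eventually_at by blast
    obtain n0 where n0: "lam ^ n0 < th / (c N - c 0 + 1)"
      using real_arch_pow_inv[of "th / (c N - c 0 + 1)" lam] th lam lt[of 0 N] assms(1) by auto
    define n where "n = Suc n0"
    have D: "c 0 < c N" using lt[of 0 N] assms(1) by auto
    have "lam ^ n * (c N - c 0) \<le> lam ^ n0 * (c N - c 0)"
      unfolding n_def using lam D by (simp add: mult_right_mono mult_left_le_one_le)
    also have "\<dots> \<le> lam ^ n0 * (c N - c 0 + 1)"
      using lam by (intro mult_left_mono) auto
    also have "\<dots> < th / (c N - c 0 + 1) * (c N - c 0 + 1)"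
      using n0 D by (intro mult_strict_right_mono) auto
    finally have small: "lam ^ n * (c N - c 0) < th" using D by simp
    have "n \<ge> 1" unfolding n_def by simp
    then obtain A where A: "A \<in> atoms_of c N f n x0" "c i \<in> A"
      and tl: "\<exists>t. (f ^^ (t + n)) x0 \<in> A \<inter> piece c N i"
      and tr: "\<exists>t'. (f ^^ (t' + n)) x0 \<in> A \<inter> piece c N (i + 1)"
      using assms(8) unfolding in_Delta_lr_def by blast
    have tt: "\<exists>t. (f ^^ (t + n)) x0 \<in> A \<inter> piece c N j"
      using j tl tr by blast
    obtain t where t: "(f ^^ (t + n)) x0 \<in> A" "(f ^^ (t + n)) x0 \<in> piece c N j" using tt by blast
    obtain w where w: "A = atom c N f w" "length w = n" "set w \<subseteq> {1..N}"
      using A(1) unfolding atoms_of_def atoms_def by blast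
    define x' where "x' = (f ^^ (t + n)) x0"
    have "\<bar>x' - c i\<bar> \<le> lam ^ n * (c N - c 0)"
      using atom_diam[OF lip, of w x' "c i"] lam w t A(2) x'_def by auto
    then have "dist (f x') p < min e r"
      using th(2) t(2) cl(2) small x'_def by (auto simp: dist_real_def)
    moreover have "f x' \<in> {c 0..c N}" using inv[OF x0S, of "Suc (t + n)"] x'_def by simp
    ultimately have "\<bar>(f ^^ m) (f x') - (f ^^ m) p\<bar> < e"
      using r by (auto simp: dist_real_def)
    then have "(f ^^ m) (f x') \<in> U" using e by (auto simp: dist_real_def)
    moreover have "(f ^^ m) (f x') = (f ^^ (m + Suc (t + n))) x0"
      unfolding x'_def by (simp add: funpow_add funpow_swap1)
    ultimately show ?thesis by metis
  qed
  show ?thesis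
  proof (intro allI impI ballI conjI)
    fix e :: real and y assume e: "e > 0" and y: "y \<in> attractor c N f"
    {
      assume "\<forall>\<nu>>0. attractor c N f \<inter> {y<..<y + \<nu>} \<noteq> {}"
      then obtain z where "z \<in> attractor c N f" "z \<in> {y<..<y + e}" using e by blast
      then show "\<exists>l. (f ^^ l) x0 \<in> {y<..<y + e}" using key[of "{y<..<y + e}" z] by auto
    next
      assume "\<forall>\<nu>>0. attractor c N f \<inter> {y - \<nu><..<y} \<noteq> {}"
      then obtain z where "z \<in> attractor c N f" "z \<in> {y - e<..<y}" using e by blast
      then show "\<exists>l. (f ^^ l) x0 \<in> {y - e<..<y}" using key[of "{y - e<..<y}" z] by auto
    }
  qed
qed

end
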